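(* Let $q$ be a power of $2$, $\beta$ a primitive element of $\mathbb{F}_{q^2}$, $\mathrm{Tr}(x)=x+x^q$, and $\Psi:\mathbb{F}_{q^2}^n\to\mathbb{F}_q^{2n}$, $\Psi(\alpha_0,\ldots,\alpha_{n-1})=\left(\mathrm{Tr}(\beta\alpha_0),\ldots,\mathrm{Tr}(\beta\alpha_{n-1}),\mathrm{Tr}(\beta^q\alpha_0),\ldots,\mathrm{Tr}(\beta^q\alpha_{n-1})\right)$. Let $g(x)\in\mathbb{F}_q[x]$ be a monic divisor of $x^{2n}-1$ with $g(x)\neq x^{2n}-1$ and $k=\deg g$, $\mathscr{D}=\langle g(x)\rangle$ the $q$-ary linear cyclic code of length $2n$ it generates, and $\mathscr{C}=\Psi^{-1}(\mathscr{D})$. Let $h(x)=(x^{2n}-1)/g(x)=h_0+\cdots+h_{2n-k}x^{2n-k}$, $h^*(x)=\frac{1}{h_{2n-k}}x^{2n-k}h(1/x)$, $V_{h^*(x)}\in\mathbb{F}_q^{2n}$ its coefficient vector, and $W_{h^{\epsilon}(x)}=\Psi^{-1}(\tau(V_{h^*(x)}))\in\mathbb{F}_{q^2}^n$. Then the $k$ vectors $W_{h^{\epsilon}(x)},T(W_{h^{\epsilon}(x)}),\ldots,T^{k-1}(W_{h^{\epsilon}(x)})$ form an $\mathbb{F}_q$-basis of the alternating dual $\mathscr{C}^{\perp_a}$.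
   Context: $\sigma(v_0,\ldots,v_{2n-1})=(v_{2n-1},v_0,\ldots,v_{2n-2})$, $\tau(v_0,\ldots,v_{2n-1})=(-v_n,\ldots,-v_{2n-1},v_0,\ldots,v_{n-1})$, and $T(c_0,\ldots,c_{n-1})=(c_{n-1}^q,c_0,\ldots,c_{n-2})$. The alternating inner product on $\mathbb{F}_{q^2}^n$ is $\langle u,v\rangle_a=(\beta^{2q}-\beta^2)\sum_{i=0}^{n-1}(u_iv_i^q-u_i^qv_i)$ and $\mathscr{C}^{\perp_a}=\{v\in\mathbb{F}_{q^2}^n:\langle u,v\rangle_a=0\ \forall u\in\mathscr{C}\}$. *)

theory Defs
  imports "HOL-Computational_Algebra.Polynomial"
begin

text \<open>Vectors of length m over a field are modelled as functions nat \<Rightarrow> 'a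
  vanishing at all indices \<ge> m.\<close>

definition vecs :: "nat \<Rightarrow> (nat \<Rightarrow> 'a::zero) set" where
  "vecs m = {v. \<forall>i\<ge>m. v i = 0}"

definition subfield_q :: "nat \<Rightarrow> 'a::field set" where
  "subfield_q q = {x. x ^ q = x}"

definition primitive_elem :: "'a::field \<Rightarrow> bool" where
  "primitive_elem b \<longleftrightarrow> b \<noteq> 0 \<and> (\<forall>x. x \<noteq> 0 \<longrightarrow> (\<exists>i::nat. b ^ i = x))"

definition Tr :: "nat \<Rightarrow> 'a::field \<Rightarrow> 'a" where
  "Tr q x = x + x ^ q"

definition Psi :: "nat \<Rightarrow> nat \<Rightarrow> 'a::field \<Rightarrow> (nat \<Rightarrow> 'a) \<Rightarrow> (nat \<Rightarrow> 'a)" where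
  "Psi q n b a = (\<lambda>i. if i < n then Tr q (b * a i)
                      else if i < 2 * n then Tr q (b ^ q * a (i - n)) else 0)"

definition Psi_inv :: "nat \<Rightarrow> nat \<Rightarrow> 'a::field \<Rightarrow> (nat \<Rightarrow> 'a) \<Rightarrow> (nat \<Rightarrow> 'a)" where
  "Psi_inv q n b = inv_into (vecs n) (Psi q n b)"

definition tau :: "nat \<Rightarrow> (nat \<Rightarrow> 'a::ab_group_add) \<Rightarrow> (nat \<Rightarrow> 'a)" where
  "tau n v = (\<lambda>i. if i < n then - v (n + i) else if i < 2 * n then v (i - n) else 0)"

definition T_map :: "nat \<Rightarrow> nat \<Rightarrow> (nat \<Rightarrow> 'a::field) \<Rightarrow> (nat \<Rightarrow> 'a)" where
  "T_map q n c = (\<lambda>i. if i = 0 then c (n - 1) ^ q else if i < n then c (i - 1) else 0)"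

definition alt_ip :: "nat \<Rightarrow> nat \<Rightarrow> 'a::field \<Rightarrow> (nat \<Rightarrow> 'a) \<Rightarrow> (nat \<Rightarrow> 'a) \<Rightarrow> 'a" where
  "alt_ip q n b u v = (b ^ (2 * q) - b ^ 2) * (\<Sum>i<n. u i * v i ^ q - u i ^ q * v i)"

definition alt_dual :: "nat \<Rightarrow> nat \<Rightarrow> 'a::field \<Rightarrow> (nat \<Rightarrow> 'a) set \<Rightarrow> (nat \<Rightarrow> 'a) set" where
  "alt_dual q n b C = {v \<in> vecs n. \<forall>u\<in>C. alt_ip q n b u v = 0}"

definition coeff_vec :: "nat \<Rightarrow> 'a::zero poly \<Rightarrow> (nat \<Rightarrow> 'a)" where
  "coeff_vec m f = (\<lambda>i. if i < m then coeff f i else 0)"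

definition poly_over :: "'a::zero set \<Rightarrow> 'a poly \<Rightarrow> bool" where
  "poly_over S f \<longleftrightarrow> (\<forall>i. coeff f i \<in> S)"

text \<open>The q-ary cyclic code of length m generated by g (polynomials over F_q
  embedded in F_{q^2}[x]).\<close>
definition cyclic_code :: "'a::field set \<Rightarrow> nat \<Rightarrow> 'a poly \<Rightarrow> (nat \<Rightarrow> 'a) set" where
  "cyclic_code F m g = {coeff_vec m ((a * g) mod (monom 1 m - 1)) | a. poly_over F a}"

definition lin_comb :: "nat \<Rightarrow> (nat \<Rightarrow> nat \<Rightarrow> 'a::field) \<Rightarrow> (nat \<Rightarrow> 'a) \<Rightarrow> (nat \<Rightarrow> 'a)" where
  "lin_comb k ws c = (\<lambda>i. \<Sum>j<k. c j * ws j i)"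

definition is_basis_over :: "'a::field set \<Rightarrow> nat \<Rightarrow> (nat \<Rightarrow> nat \<Rightarrow> 'a) \<Rightarrow> (nat \<Rightarrow> 'a) set \<Rightarrow> bool" where
  "is_basis_over F k ws S \<longleftrightarrow>
     (\<forall>c. (\<forall>j<k. c j \<in> F) \<and> lin_comb k ws c = (\<lambda>_. 0) \<longrightarrow> (\<forall>j<k. c j = 0)) \<and>
     S = {lin_comb k ws c | c. \<forall>j<k. c j \<in> F}"

end

theory Submission
  imports Defs
begin


lemma fermat_aux:
  fixes x :: "'a::{field,finite}"
  assumes "x \<noteq> 0"
  shows "x ^ (card (UNIV::'a set) - 1) = 1"
proof -
  let ?S = "{y::'a. y \<noteq> 0}"
  have inj: "inj_on ((*) x) ?S" using assms by (auto simp: inj_on_def)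
  have img: "(*) x ` ?S = ?S"
  proof
    show "(*) x ` ?S \<subseteq> ?S" using assms by auto
    show "?S \<subseteq> (*) x ` ?S"
    proof
      fix y assume "y \<in> ?S"
      then have "y = x * (y / x)" "y / x \<in> ?S" using assms by auto
      then show "y \<in> (*) x ` ?S" by blast
    qed
  qed
  have "prod (\<lambda>y. y) ?S = prod (\<lambda>y. y) ((*) x ` ?S)" using img by simp
  also have "\<dots> = prod (\<lambda>y. x * y) ?S" using prod.reindex[OF inj] by (simp add: comp_def)
  also have "\<dots> = x ^ card ?S * prod (\<lambda>y. y) ?S" by (simp add: prod.distrib)
  finally have e: "prod (\<lambda>y. y) ?S = x ^ card ?S * prod (\<lambda>y. y) ?S" .
  have nz: "prod (\<lambda>y. y) ?S \<noteq> 0" by (simp add: prod_zero_iff)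
  have "x ^ card ?S = 1" using e nz by (metis mult_cancel_right1)
  moreover have "card ?S = card (UNIV::'a set) - 1"
  proof -
    have "?S = UNIV - {0}" by auto
    then show ?thesis by (simp add: card_Diff_singleton)
  qed
  ultimately show ?thesis by simp
qed

lemma fermat:
  fixes x :: "'a::{field,finite}"
  shows "x ^ card (UNIV::'a set) = x"
proof (cases "x = 0")
  case True
  have "card (UNIV::'a set) > 0" by (simp add: finite_UNIV_card_ge_0)
  then show ?thesis using True by (simp add: power_0_left)
next
  case False
  have c: "card (UNIV::'a set) > 0" by (simp add: finite_UNIV_card_ge_0)
  have "x ^ card (UNIV::'a set) = x * x ^ (card (UNIV::'a set) - 1)"
    using c by (metis Suc_diff_1 power_Suc)
  then show ?thesis using fermat_aux[OF False] by simp
qed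



locale c2f =
  fixes q :: nat and b :: "'a::field"
  assumes two: "(2::'a) = 0"
    and frob_add: "\<And>x y::'a. (x + y) ^ q = x ^ q + y ^ q"
    and frob_inv: "\<And>x::'a. (x ^ q) ^ q = x"
    and q_pos: "0 < q"
    and b_ne: "b ^ q \<noteq> b"
begin

lemma neg_id: "- (x::'a) = x"
proof -
  have "x + x = 2 * x" by simp
  also have "\<dots> = 0" using two by simp
  finally show ?thesis by (simp add: add_eq_0_iff2)
qed

lemma minus_plus: "(x::'a) - y = x + y"
  using neg_id[of y] by (metis diff_minus_eq_add)

lemma frob_neg: "(- x::'a) ^ q = - (x ^ q)"
  by (simp add: neg_id)

lemma frob_diff: "((x::'a) - y) ^ q = x ^ q - y ^ q"
  by (simp add: minus_plus frob_add)

lemma frob_zero: "(0::'a) ^ q = 0"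
  using q_pos by simp

lemma frob_sum: "(sum f A :: 'a) ^ q = sum (\<lambda>i. f i ^ q) A"
  by (induction A rule: infinite_finite_induct) (auto simp: frob_zero frob_add)

lemma frob_one: "(1::'a) ^ q = 1" by simp

definition dl :: 'a where "dl = b ^ (2 * q) - b ^ 2"

lemma dl_ne: "dl \<noteq> 0"
proof
  assume "dl = 0"
  have e: "b ^ (2*q) = b ^ q * b ^ q" by (metis mult_2 power_add)
  have "(b ^ q + b) * (b ^ q + b) = b ^ (2*q) + 2 * b ^ q * b + b ^ 2"
    unfolding e by (simp add: algebra_simps power2_eq_square)
  also have "\<dots> = dl" using two by (simp add: dl_def minus_plus)
  finally have "(b ^ q + b) * (b ^ q + b) = 0" using \<open>dl = 0\<close> by simp
  then have "b ^ q + b = 0" by simp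
  then have "b ^ q = - b" by (simp add: eq_neg_iff_add_eq_0)
  then show False using b_ne neg_id by simp
qed

lemma dl_frob: "dl ^ q = - dl"
proof -
  have e1: "(b ^ (2 * q)) ^ q = b ^ 2"
  proof -
    have "(b ^ (2 * q)) ^ q = ((b ^ q) ^ q) ^ 2"
      by (metis mult.commute power_mult)
    then show ?thesis using frob_inv by simp
  qed
  have e2: "(b ^ 2) ^ q = b ^ (2 * q)"
    by (metis power_mult)
  have "dl ^ q = (b ^ (2 * q)) ^ q - (b ^ 2) ^ q"
    unfolding dl_def frob_diff ..
  also have "\<dots> = b ^ 2 - b ^ (2 * q)" using e1 e2 by simp
  finally show ?thesis by (simp add: dl_def)
qed

definition Fq :: "'a set" where "Fq = subfield_q q"

lemma Fq_iff: "x \<in> Fq \<longleftrightarrow> x ^ q = x" by (simp add: Fq_def subfield_q_def)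

lemma Tr_add: "Tr q (x + y) = Tr q x + Tr q (y::'a)"
  by (simp add: Tr_def frob_add algebra_simps)

lemma Tr_zero: "Tr q (0::'a) = 0" by (simp add: Tr_def frob_zero)

lemma Tr_sum: "Tr q (sum f A :: 'a) = sum (\<lambda>i. Tr q (f i)) A"
  by (induction A rule: infinite_finite_induct) (auto simp: Tr_zero Tr_add)

lemma Tr_scal: "c \<in> Fq \<Longrightarrow> Tr q (c * x) = c * Tr q (x::'a)"
  by (simp add: Tr_def Fq_iff power_mult_distrib algebra_simps)

lemma Tr_in: "Tr q (x::'a) \<in> Fq"
  by (simp add: Fq_iff Tr_def frob_add frob_inv add.commute)

lemma Tr_b: "Tr q (b * x) = b * x + b ^ q * x ^ q"
  by (simp add: Tr_def power_mult_distrib)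

lemma Tr_bq: "Tr q (b ^ q * x) = b ^ q * x + b * x ^ q"
  by (simp add: Tr_def power_mult_distrib frob_inv)

lemma inv_formula: "dl * x = b ^ q * Tr q (b ^ q * x) - b * Tr q (b * x)"
proof -
  have e: "b ^ (2*q) = b ^ q * b ^ q" by (metis mult_2 power_add)
  show ?thesis unfolding Tr_b Tr_bq dl_def e by (simp add: algebra_simps power2_eq_square)
qed

end


context c2f begin

lemma b2q: "b ^ (2*q) = b ^ q * b ^ q" by (metis mult_2 power_add)

lemma Psi_vecs: "Psi q n b w \<in> vecs (2*n)"
  by (simp add: Psi_def vecs_def)

lemma Fq_0: "0 \<in> Fq" by (simp add: Fq_iff frob_zero)

lemma Psi_F: "Psi q n b w i \<in> Fq"
  by (simp add: Psi_def Tr_in Fq_0)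

lemma Psi_inj:
  assumes "u \<in> vecs n" "v \<in> vecs n" "Psi q n b u = Psi q n b v"
  shows "u = v"
proof
  fix i
  show "u i = v i"
  proof (cases "i < n")
    case True
    have a: "Tr q (b * u i) = Tr q (b * v i)"
      using fun_cong[OF assms(3), of i] True by (simp add: Psi_def)
    have bb: "Tr q (b ^ q * u i) = Tr q (b ^ q * v i)"
      using fun_cong[OF assms(3), of "n + i"] True by (simp add: Psi_def)
    have "dl * u i = dl * v i" using inv_formula[of "u i"] inv_formula[of "v i"] a bb by simp
    then show ?thesis using dl_ne by simp
  next
    case False
    then show ?thesis using assms(1,2) by (simp add: vecs_def)
  qed
qed

lemma Psi_surj:
  assumes "y \<in> vecs (2*n)" "\<And>i. y i \<in> Fq"
  shows "\<exists>w\<in>vecs n. Psi q n b w = y"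
proof -
  define w where "w = (\<lambda>i. if i < n then (b ^ q * y (n+i) - b * y i) / dl else 0)"
  have wq: "w i ^ q = (b * y (n+i) - b ^ q * y i) / (- dl)" if "i < n" for i
  proof -
    have "w i ^ q = ((b ^ q) ^ q * y (n+i) ^ q - b ^ q * y i ^ q) / dl ^ q"
      using that by (simp add: w_def power_divide frob_diff power_mult_distrib)
    then show ?thesis using assms(2)[of i] assms(2)[of "n+i"] by (simp add: Fq_iff frob_inv dl_frob)
  qed
  have "w \<in> vecs n" by (simp add: w_def vecs_def)
  moreover have "Psi q n b w = y"
  proof
    fix i
    consider "i < n" | "n \<le> i" "i < 2*n" | "2*n \<le> i" by linarith
    then show "Psi q n b w i = y i"
    proof cases
      case 1
      have "Psi q n b w i = b * w i + b ^ q * w i ^ q" using 1 by (simp add: Psi_def Tr_b)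
      also have "\<dots> = b * ((b ^ q * y (n+i) - b * y i) / dl) + b ^ q * ((b * y (n+i) - b ^ q * y i) / (- dl))"
        using 1 wq by (simp add: w_def)
      also have "\<dots> = (b * (b ^ q * y (n+i) - b * y i) - b ^ q * (b * y (n+i) - b ^ q * y i)) / dl"
        using dl_ne by (simp add: field_simps)
      also have "\<dots> = (dl * y i) / dl"
        unfolding dl_def b2q by (simp add: algebra_simps power2_eq_square)
      also have "\<dots> = y i" using dl_ne by simp
      finally show ?thesis .
    next
      case 2
      define j where "j = i - n"
      have j: "j < n" "i = n + j" using 2 by (auto simp: j_def)
      have "Psi q n b w i = b ^ q * w j + b * w j ^ q" using 2 by (simp add: Psi_def Tr_bq j_def)
      also have "\<dots> = b ^ q * ((b ^ q * y (n+j) - b * y j) / dl) + b * ((b * y (n+j) - b ^ q * y j) / (- dl))"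
        using j wq by (simp add: w_def)
      also have "\<dots> = (b ^ q * (b ^ q * y (n+j) - b * y j) - b * (b * y (n+j) - b ^ q * y j)) / dl"
        using dl_ne by (simp add: field_simps)
      also have "\<dots> = (dl * y (n+j)) / dl"
        unfolding dl_def b2q by (simp add: algebra_simps power2_eq_square)
      also have "\<dots> = y i" using dl_ne j by simp
      finally show ?thesis .
    next
      case 3
      then show ?thesis using assms(1) by (simp add: Psi_def vecs_def)
    qed
  qed
  ultimately show ?thesis by blast
qed

lemma Psi_inv_eq:
  assumes "y \<in> vecs (2*n)" "\<And>i. y i \<in> Fq"
  shows "Psi_inv q n b y \<in> vecs n" "Psi q n b (Psi_inv q n b y) = y"
proof -
  have "y \<in> Psi q n b ` vecs n" using Psi_surj[OF assms] by auto
  then show "Psi_inv q n b y \<in> vecs n" "Psi q n b (Psi_inv q n b y) = y"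
    by (auto simp: Psi_inv_def inv_into_into f_inv_into_f)
qed

lemma Psi_lin:
  assumes "\<And>j. j < k \<Longrightarrow> c j \<in> Fq"
  shows "Psi q n b (lin_comb k ws c) = lin_comb k (\<lambda>j. Psi q n b (ws j)) c"
proof
  fix i
  have s1: "Tr q (x * (\<Sum>j<k. c j * ws j i')) = (\<Sum>j<k. c j * Tr q (x * ws j i'))" for x i'
  proof -
    have "Tr q (x * (\<Sum>j<k. c j * ws j i')) = (\<Sum>j<k. Tr q (c j * (x * ws j i')))"
      by (simp add: sum_distrib_left Tr_sum algebra_simps)
    also have "\<dots> = (\<Sum>j<k. c j * Tr q (x * ws j i'))"
      by (rule sum.cong) (auto simp: Tr_scal assms)
    finally show ?thesis .
  qed
  show "Psi q n b (lin_comb k ws c) i = lin_comb k (\<lambda>j. Psi q n b (ws j)) c i"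
    by (simp add: Psi_def lin_comb_def s1)
qed

lemma Psi_zero: "Psi q n b (\<lambda>_. 0) = (\<lambda>_. 0)"
  by (simp add: Psi_def Tr_zero fun_eq_iff)

end


definition sig :: "nat \<Rightarrow> (nat \<Rightarrow> 'a) \<Rightarrow> (nat \<Rightarrow> 'a::zero)" where
  "sig N v = (\<lambda>i. if i = 0 then v (N - 1) else if i < N then v (i - 1) else 0)"

definition dot :: "nat \<Rightarrow> (nat \<Rightarrow> 'a::comm_ring_1) \<Rightarrow> (nat \<Rightarrow> 'a) \<Rightarrow> 'a" where
  "dot N x y = (\<Sum>i<N. x i * y i)"

lemma sum_split_add: "(\<Sum>i<n+m. f i) = (\<Sum>i<n. f i) + (\<Sum>i<m. f (n + i :: nat))"
  by (induction m) (simp_all add: add.assoc)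

lemma lin_comb_vecs: "(\<And>j. j < k \<Longrightarrow> ws j \<in> vecs N) \<Longrightarrow> lin_comb k ws c \<in> vecs N"
  by (simp add: lin_comb_def vecs_def)

lemma dot_lin: "dot N x (lin_comb k ws c) = (\<Sum>j<k. c j * dot N x (ws j))"
  unfolding dot_def lin_comb_def
  by (simp add: sum_distrib_left sum_distrib_right algebra_simps sum.swap[of _ "{..<N}"])

lemma sig_lin: "sig N (lin_comb k ws c) = lin_comb k (\<lambda>j. sig N (ws j)) c"
  by (simp add: sig_def lin_comb_def fun_eq_iff)

lemma sig_vecs: "v \<in> vecs N \<Longrightarrow> sig N v \<in> vecs N"
  by (simp add: sig_def vecs_def)

lemma sig_pow_vecs: "v \<in> vecs N \<Longrightarrow> (sig N ^^ j) v \<in> vecs N"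
  by (induction j) (simp_all add: sig_vecs)

context c2f begin

lemma alt_ip_Psi:
  "alt_ip q n b u v = dot (2*n) (Psi q n b u) (tau n (Psi q n b v))"
proof -
  have t: "Psi q n b u i * tau n (Psi q n b v) i + Psi q n b u (n+i) * tau n (Psi q n b v) (n+i)
        = dl * (u i * v i ^ q - u i ^ q * v i)" if "i < n" for i
  proof -
    have "Psi q n b u i * tau n (Psi q n b v) i + Psi q n b u (n+i) * tau n (Psi q n b v) (n+i)
      = - (Tr q (b * u i) * Tr q (b ^ q * v i)) + Tr q (b ^ q * u i) * Tr q (b * v i)"
      using that by (simp add: Psi_def tau_def)
    also have "\<dots> = dl * (u i * v i ^ q - u i ^ q * v i)"
      unfolding Tr_b Tr_bq dl_def b2q by (simp add: algebra_simps power2_eq_square)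
    finally show ?thesis .
  qed
  have "dot (2*n) (Psi q n b u) (tau n (Psi q n b v))
      = (\<Sum>i<n. Psi q n b u i * tau n (Psi q n b v) i + Psi q n b u (n+i) * tau n (Psi q n b v) (n+i))"
    unfolding dot_def mult_2 sum_split_add by (simp add: sum.distrib)
  also have "\<dots> = (\<Sum>i<n. dl * (u i * v i ^ q - u i ^ q * v i))"
    by (rule sum.cong) (simp_all add: t)
  also have "\<dots> = alt_ip q n b u v"
    by (simp add: alt_ip_def dl_def sum_distrib_left)
  finally show ?thesis by simp
qed

lemma T_vecs: "n \<ge> 1 \<Longrightarrow> T_map q n (w::nat\<Rightarrow>'a) \<in> vecs n"
  by (simp add: T_map_def vecs_def)

lemma Tr_swap: "Tr q (b * x ^ q) = Tr q (b ^ q * x)"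
  by (simp add: Tr_b Tr_bq frob_inv add.commute)

lemma Tr_swap2: "Tr q (b ^ q * x ^ q) = Tr q (b * x)"
  by (simp add: Tr_b Tr_bq frob_inv add.commute)

lemma Psi_T:
  assumes "n \<ge> 1" "w \<in> vecs n"
  shows "Psi q n b (T_map q n w) = sig (2*n) (Psi q n b w)"
proof
  fix i
  consider "i = 0" | "0 < i" "i < n" | "i = n" | "n < i" "i < 2*n" | "2*n \<le> i" by linarith
  then show "Psi q n b (T_map q n w) i = sig (2*n) (Psi q n b w) i"
  proof cases
    case 1
    have "\<not> 2 * n - 1 < n" "2*n - 1 - n = n - 1" using assms(1) by auto
    then show ?thesis using assms 1 by (simp add: Psi_def T_map_def sig_def Tr_swap)
  next
    case 2
    have "i - 1 < n" using 2 by simp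
    then show ?thesis using assms 2 by (simp add: Psi_def T_map_def sig_def)
  next
    case 3
    then show ?thesis using assms by (simp add: Psi_def T_map_def sig_def Tr_swap2)
  next
    case 4
    have "i - n < n" "\<not> i - 1 < n" "i - 1 < 2*n" "i - n \<noteq> 0" "i - n - 1 = i - 1 - n" using 4 by auto
    then show ?thesis using assms 4 by (simp add: Psi_def T_map_def sig_def)
  next
    case 5
    then show ?thesis using assms by (simp add: Psi_def T_map_def sig_def)
  qed
qed

lemma T_iter:
  assumes "n \<ge> 1" "W \<in> vecs n"
  shows "(T_map q n ^^ j) W \<in> vecs n \<and> Psi q n b ((T_map q n ^^ j) W) = (sig (2*n) ^^ j) (Psi q n b W)"
proof (induction j)
  case (Suc j)
  then show ?case using Psi_T[OF assms(1)] T_vecs[OF assms(1)] by simp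
qed (simp add: assms)

lemma tau_tau: "(v::nat\<Rightarrow>'a) \<in> vecs (2*n) \<Longrightarrow> tau n (tau n v) = v"
  by (auto simp: tau_def vecs_def fun_eq_iff neg_id)

lemma tau_vecs: "tau n v \<in> vecs (2*n)"
  by (simp add: tau_def vecs_def)

lemma tau_F: "(\<And>i. (v::nat\<Rightarrow>'a) i \<in> Fq) \<Longrightarrow> tau n v i \<in> Fq"
  by (simp add: tau_def neg_id Fq_0)

lemma tau_lin: "tau n (lin_comb k ws (c::nat\<Rightarrow>'a)) = lin_comb k (\<lambda>j. tau n (ws j)) c"
  by (simp add: tau_def lin_comb_def fun_eq_iff neg_id)

lemma tau_sig:
  assumes "n \<ge> 1" "(v::nat\<Rightarrow>'a) \<in> vecs (2*n)"
  shows "tau n (sig (2*n) v) = sig (2*n) (tau n v)"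
proof
  fix i
  consider "i = 0" | "0 < i" "i < n" | "i = n" | "n < i" "i < 2*n" | "2*n \<le> i" by linarith
  then show "tau n (sig (2*n) v) i = sig (2*n) (tau n v) i"
  proof cases
    case 1
    have "\<not> 2 * n - 1 < n" "2*n - 1 - n = n - 1" using assms(1) by auto
    then show ?thesis using assms 1 by (simp add: tau_def sig_def neg_id)
  next
    case 2
    then show ?thesis using assms by (simp add: tau_def sig_def neg_id)
  next
    case 3
    then show ?thesis using assms by (simp add: tau_def sig_def neg_id mult_2)
  next
    case 4
    have "i - n < n" "\<not> i - 1 < n" "i - 1 < 2*n" "i - n \<noteq> 0" "i - n - 1 = i - 1 - n" using 4 by auto
    then show ?thesis using assms 4 by (simp add: tau_def sig_def neg_id)
  next
    case 5
    then show ?thesis using assms by (simp add: tau_def sig_def neg_id)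
  qed
qed

lemma tau_sig_pow:
  assumes "n \<ge> 1" "(v::nat\<Rightarrow>'a) \<in> vecs (2*n)"
  shows "(sig (2*n) ^^ j) (tau n v) = tau n ((sig (2*n) ^^ j) v)"
proof (induction j)
  case (Suc j)
  have "(sig (2*n) ^^ j) v \<in> vecs (2*n)" using sig_pow_vecs assms by simp
  then show ?case using Suc tau_sig[OF assms(1)] by simp
qed simp

end


definition Mp :: "nat \<Rightarrow> 'a::comm_ring_1 poly" where "Mp N = monom 1 N - 1"

lemma coeff_Mp: "coeff (Mp N) i = (if i = N then 1 else 0) - (if i = 0 then 1 else 0)"
  by (simp add: Mp_def coeff_monom)

lemma degree_Mp: "N \<ge> 1 \<Longrightarrow> degree (Mp N :: 'a::comm_ring_1 poly) = N"
proof -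
  assume N: "N \<ge> 1"
  have "coeff (Mp N :: 'a poly) N \<noteq> 0" using N by (simp add: coeff_Mp)
  then have "N \<le> degree (Mp N :: 'a poly)" by (rule le_degree)
  moreover have "degree (Mp N :: 'a poly) \<le> N" by (rule degree_le) (simp add: coeff_Mp)
  ultimately show ?thesis by simp
qed

lemma Mp_ne: "N \<ge> 1 \<Longrightarrow> (Mp N :: 'a::comm_ring_1 poly) \<noteq> 0"
proof
  assume N: "N \<ge> 1" and z: "(Mp N :: 'a poly) = 0"
  have "degree (Mp N :: 'a poly) = N" using degree_Mp N by blast
  then show False using z N by simp
qed

context c2f begin

definition phi :: "'a poly \<Rightarrow> 'a poly" where "phi p = map_poly (\<lambda>x. x ^ q) p"

lemma coeff_phi: "coeff (phi p) i = coeff p i ^ q"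
  by (simp add: phi_def coeff_map_poly frob_zero)

lemma phi_mult: "phi (p * r) = phi p * phi r"
  by (rule poly_eqI) (simp add: coeff_phi coeff_mult frob_sum power_mult_distrib)

lemma phi_fix: "phi p = p \<longleftrightarrow> poly_over Fq p"
  unfolding poly_eq_iff coeff_phi poly_over_def Fq_iff ..

lemma Fq_diff: "x \<in> Fq \<Longrightarrow> y \<in> Fq \<Longrightarrow> x - y \<in> Fq"
  by (simp add: Fq_iff frob_diff)

lemma Fq_1: "1 \<in> Fq" by (simp add: Fq_iff)

lemma Mp_over: "poly_over Fq (Mp N)"
  by (simp add: poly_over_def coeff_Mp Fq_diff Fq_0 Fq_1)

lemma phi_cancel: "phi p * r = p * r \<Longrightarrow> r \<noteq> 0 \<Longrightarrow> poly_over Fq p"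
proof -
  assume a: "phi p * r = p * r" "r \<noteq> 0"
  then have "phi p = p" by simp
  then show ?thesis using phi_fix by simp
qed

lemma monom_over: "c \<in> Fq \<Longrightarrow> poly_over Fq (monom c s)"
  by (simp add: poly_over_def coeff_monom Fq_0)

end


locale cyc = c2f q b for q and b :: "'a::field" +
  fixes n :: nat and g :: "'a poly"
  assumes n1: "n \<ge> 1"
    and g_over: "poly_over (subfield_q q) g"
    and g_monic: "lead_coeff g = 1"
    and g_dvd: "g dvd Mp (2*n)"
    and g_ne: "g \<noteq> Mp (2*n)"
begin

abbreviation NN where "NN \<equiv> 2 * n"

definition k where "k = degree g"
definition h where "h = Mp NN div g"
definition hs where "hs = smult (inverse (lead_coeff h)) (reflect_poly h)"

lemma N1: "NN \<ge> 1" using n1 by simp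

lemma gh: "g * h = Mp NN" unfolding h_def using g_dvd by simp

lemma degMp: "degree (Mp NN :: 'a poly) = NN" using degree_Mp N1 by blast

lemma Mp_ne': "Mp NN \<noteq> (0::'a poly)" using Mp_ne N1 by blast

lemma g_ne0: "g \<noteq> 0" using gh Mp_ne' by auto
lemma h_ne0: "h \<noteq> 0" using gh Mp_ne' by auto

lemma deg_gh: "k + degree h = NN"
proof -
  have "degree (g * h) = k + degree h" using g_ne0 h_ne0 by (simp add: degree_mult_eq k_def)
  then show ?thesis using gh degMp by simp
qed

lemma lead_h: "lead_coeff h = 1"
proof -
  have "lead_coeff (g * h) = lead_coeff h" by (simp add: lead_coeff_mult g_monic)
  moreover have "lead_coeff (Mp NN :: 'a poly) = 1"
    using degMp N1 by (simp add: coeff_Mp)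
  ultimately show ?thesis using gh by simp
qed

lemma k_lt: "k < NN"
proof (rule ccontr)
  assume "\<not> k < NN"
  then have "degree h = 0" using deg_gh by simp
  then have "h = [:coeff h 0:]" using degree_0_id by metis
  also have "coeff h 0 = 1" using lead_h \<open>degree h = 0\<close> by simp
  finally have "h = 1" by (simp add: one_pCons)
  then show False using gh g_ne by simp
qed

lemma deg_h: "degree h = NN - k" using deg_gh by simp

lemma g0h0: "coeff g 0 * coeff h 0 = -1"
proof -
  have "coeff (g * h) 0 = -1" using gh N1 by (simp add: coeff_Mp)
  then show ?thesis by (simp add: coeff_mult_0)
qed

lemma g0: "coeff g 0 \<noteq> 0" using g0h0 by auto
lemma h0: "coeff h 0 \<noteq> 0" using g0h0 by auto

lemma g_over': "poly_over Fq g" using g_over by (simp add: Fq_def)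

lemma h_over: "poly_over Fq h"
proof (rule phi_cancel)
  have "phi g = g" using g_over' phi_fix by blast
  then have "phi h * g = phi h * phi g" by simp
  also have "\<dots> = phi (g * h)" by (simp add: phi_mult mult.commute)
  also have "\<dots> = g * h" unfolding gh using Mp_over phi_fix by simp
  finally show "phi h * g = h * g" by (simp add: mult.commute)
  show "g \<noteq> 0" by (rule g_ne0)
qed

lemma hs_eq: "hs = reflect_poly h" by (simp add: hs_def lead_h)

lemma deg_hs: "degree hs = NN - k" using h0 deg_h by (simp add: hs_eq)

lemma coeff_hs: "coeff hs t = (if t > NN - k then 0 else coeff h (NN - k - t))"
  by (simp add: hs_eq coeff_reflect_poly deg_h)

lemma hs0: "coeff hs 0 = 1" using lead_h by (simp add: hs_eq)

lemma hs_ne0: "hs \<noteq> 0" using hs0 by auto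

lemma hs_over: "poly_over Fq hs"
  using h_over by (simp add: poly_over_def coeff_hs Fq_0)

lemma sig_cv:
  assumes "coeff (p::'a poly) (NN - 1) = 0"
  shows "sig NN (coeff_vec NN p) = coeff_vec NN (monom 1 1 * p)"
proof
  fix i
  show "sig NN (coeff_vec NN p) i = coeff_vec NN (monom 1 1 * p) i"
    using assms N1 by (auto simp: sig_def coeff_vec_def coeff_monom_mult)
qed

lemma sigV: "j < k \<Longrightarrow> (sig NN ^^ j) (coeff_vec NN hs) = coeff_vec NN (monom 1 j * hs)"
proof (induction j)
  case 0
  then show ?case by simp
next
  case (Suc j)
  have "degree (monom 1 j * hs) \<le> j + (NN - k)"
    using degree_mult_le[of "monom 1 j" hs] degree_monom_le[of "1::'a" j] deg_hs by linarith
  also have "\<dots> < NN - 1" using Suc.prems k_lt by linarith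
  finally have "coeff (monom 1 j * hs) (NN - 1) = 0" by (rule coeff_eq_0)
  then have "sig NN (coeff_vec NN (monom 1 j * hs)) = coeff_vec NN (monom 1 (Suc j) * hs)"
    by (simp add: sig_cv mult.assoc[symmetric] mult_monom)
  then show ?case using Suc by simp
qed

end


context cyc begin

lemma cr_coeff:
  assumes "i < NN" "j < k"
  shows "coeff (monom 1 j * hs) i = coeff (monom 1 (k - 1 - j) * h) (NN - 1 - i)"
proof -
  have kN: "k < NN" by (rule k_lt)
  consider "i < j" | "j \<le> i" "NN - k < i - j" | "j \<le> i" "i - j \<le> NN - k" by linarith
  then show ?thesis
  proof cases
    case 1
    have a: "\<not> NN - 1 - i < k - 1 - j" using 1 assms kN by linarith
    have "degree h < NN - 1 - i - (k - 1 - j)" using 1 assms kN deg_h by linarith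
    then have "coeff h (NN - 1 - i - (k - 1 - j)) = 0" by (rule coeff_eq_0)
    then show ?thesis using 1 a by (simp add: coeff_monom_mult)
  next
    case 2
    have a: "NN - 1 - i < k - 1 - j" using 2 assms kN by linarith
    then show ?thesis using 2 by (simp add: coeff_monom_mult coeff_hs)
  next
    case 3
    have a: "\<not> NN - 1 - i < k - 1 - j" "NN - 1 - i - (k - 1 - j) = NN - k - (i - j)"
      using 3 assms kN by linarith+
    then show ?thesis using 3 by (simp add: coeff_monom_mult coeff_hs)
  qed
qed

lemma coeff_Mp_mult_top:
  assumes "degree (Q :: 'a poly) < NN - 1"
  shows "coeff (Mp NN * Q) (NN - 1) = 0"
proof -
  have "Mp NN * Q = monom 1 NN * Q - Q" by (simp add: Mp_def algebra_simps)
  then show ?thesis using assms N1 by (simp add: coeff_monom_mult coeff_eq_0)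
qed

lemma orth:
  assumes "j < k"
  shows "dot NN (coeff_vec NN ((a * g) mod Mp NN)) (coeff_vec NN (monom 1 j * hs)) = 0"
proof -
  define c where "c = (a * g) mod Mp NN"
  define r where "r = monom 1 (k - 1 - j) * h"
  have degc: "degree c \<le> NN - 1"
    using degree_mod_less[OF Mp_ne', of "a*g"] degMp N1 by (auto simp: c_def)
  have degr: "degree r \<le> (k - 1 - j) + (NN - k)"
    using degree_mult_le[of "monom 1 (k - 1 - j)" h] degree_monom_le[of "1::'a" "k - 1 - j"] deg_h
    unfolding r_def by linarith
  have "dot NN (coeff_vec NN c) (coeff_vec NN (monom 1 j * hs)) = (\<Sum>i\<le>NN - 1. coeff c i * coeff r (NN - 1 - i))"
  proof -
    have e: "{..<NN} = {..NN - 1}" using N1 by auto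
    show ?thesis unfolding dot_def e
      by (rule sum.cong) (use N1 assms in \<open>auto simp: coeff_vec_def cr_coeff r_def\<close>)
  qed
  also have "\<dots> = coeff (c * r) (NN - 1)" by (simp add: coeff_mult)
  also have "\<dots> = 0"
  proof -
    have cdef: "c = a * g - (a * g div Mp NN) * Mp NN"
      using div_mult_mod_eq[of "a*g" "Mp NN"] unfolding c_def by (simp add: algebra_simps)
    define Qq where "Qq = a * monom 1 (k - 1 - j) - (a * g div Mp NN) * r"
    have crQ: "c * r = Mp NN * Qq"
    proof -
      have "c * r = a * monom 1 (k - 1 - j) * (g * h) - (a * g div Mp NN) * r * Mp NN"
        unfolding cdef r_def by (simp add: algebra_simps)
      then show ?thesis unfolding gh Qq_def by (simp add: algebra_simps)
    qed
    show ?thesis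
    proof (cases "Qq = 0")
      case True
      then show ?thesis using crQ by (metis coeff_0 mult_zero_right)
    next
      case False
      have "degree (c * r) = NN + degree Qq"
        using crQ False Mp_ne' degMp by (simp add: degree_mult_eq)
      moreover have "degree (c * r) \<le> degree c + degree r" by (rule degree_mult_le)
      ultimately have "degree Qq < NN - 1" using degc degr assms k_lt by linarith
      then show ?thesis using crQ coeff_Mp_mult_top by simp
    qed
  qed
  finally show ?thesis unfolding c_def .
qed

lemma expand:
  assumes "\<forall>j\<ge>k. coeff P j = 0"
  shows "coeff_vec NN (P * hs) = lin_comb k (\<lambda>j. coeff_vec NN (monom 1 j * hs)) (coeff P)"
proof -
  have P: "P = (\<Sum>j<k. monom (coeff P j) j)"
    by (rule poly_eqI) (use assms in \<open>auto simp: coeff_sum coeff_monom sum.delta not_less\<close>)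
  have "coeff (P * hs) i = (\<Sum>j<k. coeff P j * coeff (monom 1 j * hs) i)" for i
  proof -
    have "coeff (P * hs) i = coeff ((\<Sum>j<k. monom (coeff P j) j) * hs) i" using P by simp
    also have "\<dots> = (\<Sum>j<k. coeff (monom (coeff P j) j * hs) i)"
      by (simp add: sum_distrib_right coeff_sum)
    also have "\<dots> = (\<Sum>j<k. coeff P j * coeff (monom 1 j * hs) i)"
      by (rule sum.cong) (simp_all add: coeff_monom_mult)
    finally show ?thesis .
  qed
  then show ?thesis by (simp add: coeff_vec_def lin_comb_def fun_eq_iff)
qed

end


context cyc begin

lemma dot_diff: "dot N x (\<lambda>i. y i - z i) = dot N x y - dot N x z"
  by (simp add: dot_def right_diff_distrib sum_subtractf)

lemma dual_sub:
  assumes y: "y \<in> vecs NN" "\<And>i. y i \<in> Fq"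
    and orthy: "\<And>s. s < NN - k \<Longrightarrow> dot NN (coeff_vec NN (monom 1 s * g)) y = 0"
  shows "\<exists>c. (\<forall>j<k. c j \<in> Fq) \<and> y = lin_comb k (\<lambda>j. coeff_vec NN (monom 1 j * hs)) c"
proof -
  define Y where "Y = (\<Sum>t<NN. monom (y t) t)"
  have cY: "coeff Y t = y t" for t
    using y(1) by (auto simp: Y_def coeff_sum coeff_monom sum.delta vecs_def)
  have cvY: "coeff_vec NN Y = y"
    using y(1) by (auto simp: coeff_vec_def cY fun_eq_iff vecs_def)
  have degY: "degree Y \<le> NN - 1"
    by (rule degree_le) (use y(1) N1 in \<open>auto simp: cY vecs_def\<close>)
  have Yover: "poly_over Fq Y" by (simp add: poly_over_def cY y(2))
  define P where "P = Y div hs"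
  define R where "R = Y mod hs"
  have YPR: "Y = P * hs + R" using div_mult_mod_eq[of Y hs] by (simp add: P_def R_def)
  have degR: "R = 0 \<or> degree R < NN - k"
    using degree_mod_less[OF hs_ne0, of Y] deg_hs by (simp add: R_def)
  have Pk: "\<forall>j\<ge>k. coeff P j = 0"
  proof (cases "P = 0")
    case True
    then show ?thesis by simp
  next
    case False
    have dPh: "degree (P * hs) = degree P + (NN - k)"
      using False hs_ne0 deg_hs by (simp add: degree_mult_eq)
    have "degree Y = degree (P * hs)"
    proof (cases "R = 0")
      case True
      then show ?thesis using YPR by simp
    next
      case False
      then have "degree R < degree (P * hs)" using degR dPh by linarith
      then show ?thesis using YPR by (simp add: degree_add_eq_left)
    qed
    then have "degree P < k" using degY dPh k_lt by linarith
    then show ?thesis by (auto intro: coeff_eq_0)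
  qed
  have orthPh: "dot NN (coeff_vec NN ((a * g) mod Mp NN)) (coeff_vec NN (P * hs)) = 0" for a
    unfolding expand[OF Pk] dot_lin by (simp add: orth)
  have R0: "R = 0"
  proof (rule ccontr)
    assume Rne: "R \<noteq> 0"
    define e where "e = degree R"
    have eN: "e < NN - k" using degR Rne e_def by simp
    let ?a = "monom 1 e :: 'a poly"
    have dag: "degree (?a * g) = e + k"
      using g_ne0 by (simp add: degree_mult_eq degree_monom_eq k_def)
    have modeq: "(?a * g) mod Mp NN = ?a * g"
      by (rule mod_poly_less) (use dag degMp eN in simp)
    have cvR: "coeff_vec NN R = (\<lambda>i. y i - coeff_vec NN (P * hs) i)"
    proof
      fix i
      have "coeff R i = coeff Y i - coeff (P * hs) i" using YPR by (metis add_diff_cancel_left' coeff_diff)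
      then show "coeff_vec NN R i = y i - coeff_vec NN (P * hs) i"
        using y(1) by (auto simp: coeff_vec_def cY vecs_def)
    qed
    have z: "dot NN (coeff_vec NN (?a * g)) (coeff_vec NN R) = 0"
    proof -
      have "dot NN (coeff_vec NN (?a * g)) y = 0"
        using orthy[OF eN] by simp
      moreover have "dot NN (coeff_vec NN (?a * g)) (coeff_vec NN (P * hs)) = 0"
        using orthPh[of ?a] modeq by simp
      ultimately show ?thesis unfolding cvR dot_diff by simp
    qed
    have "dot NN (coeff_vec NN (?a * g)) (coeff_vec NN R) = (\<Sum>i<NN. if i = e then coeff g 0 * coeff R e else 0)"
      unfolding dot_def
    proof (rule sum.cong)
      fix i assume i: "i \<in> {..<NN}"
      consider "i < e" | "i = e" | "e < i" by linarith
      then show "coeff_vec NN (?a * g) i * coeff_vec NN R i = (if i = e then coeff g 0 * coeff R e else 0)"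
      proof cases
        case 3
        then have "coeff R i = 0" using e_def by (simp add: coeff_eq_0)
        then show ?thesis using i 3 by (simp add: coeff_vec_def)
      qed (use i in \<open>auto simp: coeff_vec_def coeff_monom_mult\<close>)
    qed simp
    also have "\<dots> = coeff g 0 * coeff R e" using eN by simp
    finally have "coeff g 0 * coeff R e = 0" using z by simp
    then show False using g0 Rne e_def by simp
  qed
  have YP: "Y = P * hs" using YPR R0 by simp
  have Pover: "poly_over Fq P"
  proof (rule phi_cancel)
    have "phi hs = hs" using hs_over phi_fix by blast
    have "phi Y = Y" using phi_fix Yover by blast
    then show "phi P * hs = P * hs" using YP phi_mult \<open>phi hs = hs\<close> by metis
    show "hs \<noteq> 0" by (rule hs_ne0)
  qed
  have "y = lin_comb k (\<lambda>j. coeff_vec NN (monom 1 j * hs)) (coeff P)"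
    using cvY YP expand[OF Pk] by simp
  moreover have "\<forall>j<k. coeff P j \<in> Fq" using Pover by (simp add: poly_over_def)
  ultimately show ?thesis by blast
qed

lemma indep:
  assumes "lin_comb k (\<lambda>j. coeff_vec NN (monom 1 j * hs)) c = (\<lambda>_. 0)" "j < k"
  shows "c j = 0"
proof -
  define Pc where "Pc = (\<Sum>i<k. monom (c i) i)"
  have cP: "coeff Pc i = (if i < k then c i else 0)" for i
    by (simp add: Pc_def coeff_sum coeff_monom sum.delta)
  have Pk: "\<forall>i\<ge>k. coeff Pc i = 0" by (simp add: cP)
  have "lin_comb k (\<lambda>j. coeff_vec NN (monom 1 j * hs)) (coeff Pc) = lin_comb k (\<lambda>j. coeff_vec NN (monom 1 j * hs)) c"
    by (simp add: lin_comb_def cP)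
  then have cv0: "coeff_vec NN (Pc * hs) = (\<lambda>_. 0)" using expand[OF Pk] assms(1) by simp
  have "degree Pc \<le> k - 1" by (rule degree_le) (use assms(2) in \<open>auto simp: cP\<close>)
  then have dP: "degree (Pc * hs) < NN"
    using degree_mult_le[of Pc hs] deg_hs assms(2) k_lt by linarith
  have "Pc * hs = 0"
  proof (rule poly_eqI)
    fix i
    show "coeff (Pc * hs) i = coeff 0 i"
    proof (cases "i < NN")
      case True
      then show ?thesis using fun_cong[OF cv0, of i] by (simp add: coeff_vec_def)
    next
      case False
      then show ?thesis using dP by (simp add: coeff_eq_0)
    qed
  qed
  then have "Pc = 0" using hs_ne0 by simp
  then show ?thesis using cP[of j] assms(2) by simp
qed

end


context cyc begin

lemma main:
  "is_basis_over Fq k (\<lambda>j. (T_map q n ^^ j) (Psi_inv q n b (tau n (coeff_vec NN hs))))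
     (alt_dual q n b {w \<in> vecs n. Psi q n b w \<in> cyclic_code Fq NN g})"
proof -
  define V where "V = coeff_vec NN hs"
  define U where "U = (\<lambda>j. coeff_vec NN (monom 1 j * hs))"
  define W where "W = Psi_inv q n b (tau n V)"
  define ws where "ws = (\<lambda>j. (T_map q n ^^ j) W)"
  define C where "C = {w \<in> vecs n. Psi q n b w \<in> cyclic_code Fq NN g}"
  have Vv: "V \<in> vecs NN" by (simp add: V_def coeff_vec_def vecs_def)
  have VF: "V i \<in> Fq" for i using hs_over by (simp add: V_def coeff_vec_def poly_over_def Fq_0)
  have Uv: "U j \<in> vecs NN" for j by (simp add: U_def coeff_vec_def vecs_def)
  have W: "W \<in> vecs n" "Psi q n b W = tau n V"
    using Psi_inv_eq[OF tau_vecs tau_F[OF VF]] by (simp_all add: W_def)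
  have ws: "ws j \<in> vecs n" "j < k \<Longrightarrow> Psi q n b (ws j) = tau n (U j)" for j
  proof -
    have "ws j \<in> vecs n \<and> Psi q n b (ws j) = (sig NN ^^ j) (Psi q n b W)"
      unfolding ws_def by (rule T_iter[OF n1 W(1)])
    moreover have "(sig NN ^^ j) (tau n V) = tau n ((sig NN ^^ j) V)"
      by (rule tau_sig_pow[OF n1 Vv])
    ultimately show "ws j \<in> vecs n" "j < k \<Longrightarrow> Psi q n b (ws j) = tau n (U j)"
      using W(2) sigV by (auto simp: U_def V_def)
  qed
  have Psi_lc: "Psi q n b (lin_comb k ws c) = tau n (lin_comb k U c)" if "\<forall>j<k. c j \<in> Fq" for c
  proof -
    have "Psi q n b (lin_comb k ws c) = lin_comb k (\<lambda>j. Psi q n b (ws j)) c"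
      using that by (simp add: Psi_lin)
    also have "\<dots> = lin_comb k (\<lambda>j. tau n (U j)) c"
      unfolding lin_comb_def by (rule ext, rule sum.cong) (simp_all add: ws(2))
    also have "\<dots> = tau n (lin_comb k U c)" by (simp add: tau_lin)
    finally show ?thesis .
  qed
  have lcU: "lin_comb k U c \<in> vecs NN" for c by (rule lin_comb_vecs) (simp add: Uv)
  have lcws: "lin_comb k ws c \<in> vecs n" for c by (rule lin_comb_vecs) (simp add: ws(1))
  have indep: "\<forall>j<k. c j = 0" if "\<forall>j<k. c j \<in> Fq" "lin_comb k ws c = (\<lambda>_. 0)" for c
  proof -
    have "tau n (lin_comb k U c) = (\<lambda>_. 0)" using Psi_lc[OF that(1)] that(2) Psi_zero by simp
    then have "tau n (tau n (lin_comb k U c)) = tau n (\<lambda>_. 0)" by simp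
    then have "lin_comb k U c = (\<lambda>_. 0)" using tau_tau[OF lcU] by (simp add: tau_def fun_eq_iff)
    then show ?thesis using indep unfolding U_def by blast
  qed
  have sup: "lin_comb k ws c \<in> alt_dual q n b C" if c: "\<forall>j<k. c j \<in> Fq" for c
  proof -
    have "alt_ip q n b u (lin_comb k ws c) = 0" if u: "u \<in> C" for u
    proof -
      obtain a where a: "poly_over Fq a" "Psi q n b u = coeff_vec NN ((a * g) mod (monom 1 NN - 1))"
        using u by (auto simp: C_def cyclic_code_def)
      have "alt_ip q n b u (lin_comb k ws c) = dot NN (Psi q n b u) (lin_comb k U c)"
        unfolding alt_ip_Psi Psi_lc[OF c] tau_tau[OF lcU] ..
      also have "\<dots> = (\<Sum>j<k. c j * dot NN (Psi q n b u) (U j))" by (rule dot_lin)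
      also have "\<dots> = 0"
        using orth[of _ a] a(2) by (simp add: U_def Mp_def)
      finally show ?thesis .
    qed
    then show ?thesis by (simp add: alt_dual_def lcws)
  qed
  have sub: "\<exists>c. (\<forall>j<k. c j \<in> Fq) \<and> v = lin_comb k ws c" if v: "v \<in> alt_dual q n b C" for v
  proof -
    have vv: "v \<in> vecs n" and vo: "\<And>u. u \<in> C \<Longrightarrow> alt_ip q n b u v = 0"
      using v by (auto simp: alt_dual_def)
    define y where "y = tau n (Psi q n b v)"
    have yv: "y \<in> vecs NN" by (simp add: y_def tau_vecs)
    have yF: "y i \<in> Fq" for i by (simp add: y_def tau_F Psi_F)
    have orthy: "dot NN (coeff_vec NN (monom 1 s * g)) y = 0" if s: "s < NN - k" for s
    proof -
      define d where "d = coeff_vec NN (monom 1 s * g)"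
      have dv: "d \<in> vecs NN" by (simp add: d_def coeff_vec_def vecs_def)
      have dF: "d i \<in> Fq" for i
        using g_over' by (simp add: d_def coeff_vec_def coeff_monom_mult poly_over_def Fq_0)
      have dag: "degree (monom 1 s * g) = s + k"
        using g_ne0 by (simp add: degree_mult_eq degree_monom_eq k_def)
      have modeq: "(monom 1 s * g) mod (monom 1 NN - 1) = monom 1 s * g"
        using mod_poly_less[of "monom 1 s * g" "Mp NN"] dag degMp s by (simp add: Mp_def)
      define u where "u = Psi_inv q n b d"
      have u: "u \<in> vecs n" "Psi q n b u = d" using Psi_inv_eq[OF dv dF] by (simp_all add: u_def)
      have dd: "d = coeff_vec NN ((monom 1 s * g) mod (monom 1 NN - 1))" using modeq d_def by simp
      have "d \<in> cyclic_code Fq NN g"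
        unfolding cyclic_code_def using monom_over[OF Fq_1, of s] dd by blast
      then have "u \<in> C" using u by (simp add: C_def)
      then have "alt_ip q n b u v = 0" by (rule vo)
      then show ?thesis by (simp add: alt_ip_Psi u(2) y_def d_def)
    qed
    obtain c where c: "\<forall>j<k. c j \<in> Fq" "y = lin_comb k U c"
      using dual_sub[OF yv yF orthy] unfolding U_def by blast
    have "Psi q n b (lin_comb k ws c) = tau n y" using Psi_lc[OF c(1)] c(2) by simp
    also have "\<dots> = Psi q n b v" unfolding y_def by (rule tau_tau[OF Psi_vecs])
    finally have "lin_comb k ws c = v" by (rule Psi_inj[OF lcws vv])
    then show ?thesis using c(1) by blast
  qed
  have "alt_dual q n b C = {lin_comb k ws c | c. \<forall>j<k. c j \<in> Fq}"
    using sup sub by blast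
  then show ?thesis using indep unfolding is_basis_over_def ws_def W_def V_def C_def by blast
qed

end


lemma card_ge2: "card (UNIV::'a::{field,finite} set) \<ge> 2"
proof -
  have "card {0::'a, 1} = 2" by simp
  moreover have "card {0::'a, 1} \<le> card (UNIV::'a set)" by (rule card_mono) auto
  ultimately show ?thesis by simp
qed

lemma frob2:
  fixes x y :: "'a::field"
  assumes "(2::'a) = 0"
  shows "(x + y) ^ (2 ^ m) = x ^ (2 ^ m) + y ^ (2 ^ m)"
proof (induction m)
  case 0
  then show ?case by simp
next
  case (Suc m)
  have sq: "(u + v) ^ 2 = u ^ 2 + v ^ 2" for u v :: 'a
  proof -
    have "(u + v) ^ 2 = u ^ 2 + 2 * u * v + v ^ 2" by (simp add: power2_eq_square algebra_simps)
    then show ?thesis using assms by simp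
  qed
  have "(x + y) ^ (2 ^ Suc m) = ((x + y) ^ (2 ^ m)) ^ 2" by (simp only: power_Suc2 power_mult)
  also have "\<dots> = (x ^ (2 ^ m)) ^ 2 + (y ^ (2 ^ m)) ^ 2" using Suc sq by simp
  also have "\<dots> = x ^ (2 ^ Suc m) + y ^ (2 ^ Suc m)" by (simp only: power_Suc2 power_mult)
  finally show ?case .
qed

theorem theorem4p6:
  fixes q n m :: nat and \<beta> :: "'a::{field,finite}" and g :: "'a poly"
  assumes "q = 2 ^ m"
    and "card (UNIV :: 'a set) = q ^ 2"
    and "primitive_elem \<beta>"
    and "n \<ge> 1"
    and "poly_over (subfield_q q) g"
    and "lead_coeff g = 1"
    and "g dvd (monom 1 (2 * n) - 1)"
    and "g \<noteq> monom 1 (2 * n) - 1"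
  shows "let k = degree g;
             D = cyclic_code (subfield_q q) (2 * n) g;
             C = {w \<in> vecs n. Psi q n \<beta> w \<in> D};
             h = (monom 1 (2 * n) - 1) div g;
             hstar = smult (inverse (lead_coeff h)) (reflect_poly h);
             W = Psi_inv q n \<beta> (tau n (coeff_vec (2 * n) hstar))
         in is_basis_over (subfield_q q) k (\<lambda>j. (T_map q n ^^ j) W) (alt_dual q n \<beta> C)"
proof -
  have m1: "m \<ge> 1"
  proof (rule ccontr)
    assume "\<not> m \<ge> 1"
    then have "q = 1" using assms(1) by simp
    then show False using card_ge2[where 'a='a] assms(2) by simp
  qed
  have q2: "q \<ge> 2"
  proof -
    have "(2::nat) ^ 1 \<le> 2 ^ m" by (rule power_increasing) (use m1 in auto)
    then show ?thesis using assms(1) by simp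
  qed
  have two: "(2::'a) = 0"
  proof -
    have evq: "even q" using assms(1) m1 by simp
    have odd: "odd (card (UNIV::'a set) - 1)"
      using assms(2) evq q2 by (simp add: power2_eq_square)
    have "(-1::'a) ^ (card (UNIV::'a set) - 1) = 1" by (rule fermat_aux) simp
    then have "(-1::'a) = 1" using odd by simp
    have "(2::'a) = 1 + 1" by simp
    also have "\<dots> = 1 + (-1)" using \<open>(-1::'a) = 1\<close> by simp
    finally show ?thesis by simp
  qed
  have frob_add: "(x + y) ^ q = x ^ q + y ^ q" for x y :: 'a
    using frob2[OF two] assms(1) by simp
  have frob_inv: "(x ^ q) ^ q = x" for x :: 'a
  proof -
    have "(x ^ q) ^ q = x ^ (q * q)" by (simp add: power_mult)
    also have "q * q = card (UNIV::'a set)" using assms(2) by (simp add: power2_eq_square)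
    finally show ?thesis using fermat[of x] by simp
  qed
  have b_ne: "\<beta> ^ q \<noteq> \<beta>"
  proof
    assume bq: "\<beta> ^ q = \<beta>"
    have b0: "\<beta> \<noteq> 0" using assms(3) by (simp add: primitive_elem_def)
    have b1: "\<beta> ^ (q - 1) = 1"
    proof -
      have qs: "q = Suc (q - 1)" using q2 by simp
      have "\<beta> * \<beta> ^ (q - 1) = \<beta> ^ q" by (subst (2) qs) simp
      then have "\<beta> * \<beta> ^ (q - 1) = \<beta> * 1" using bq by simp
      then show ?thesis using b0 by simp
    qed
    have sub: "{x::'a. x \<noteq> 0} \<subseteq> (\<lambda>i. \<beta> ^ i) ` {..<q - 1}"
    proof
      fix x :: 'a assume "x \<in> {x. x \<noteq> 0}"
      then obtain i where i: "\<beta> ^ i = x" using assms(3) by (auto simp: primitive_elem_def)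
      have "\<beta> ^ i = \<beta> ^ ((i div (q - 1)) * (q - 1) + i mod (q - 1))" by (simp only: div_mult_mod_eq)
      also have "\<dots> = \<beta> ^ (i mod (q - 1))"
      proof -
        have "\<beta> ^ ((i div (q - 1)) * (q - 1)) = (\<beta> ^ (q - 1)) ^ (i div (q - 1))"
          by (simp only: mult.commute[of "i div (q - 1)"] power_mult)
        then have "\<beta> ^ ((i div (q - 1)) * (q - 1)) = 1" using b1 by simp
        then show ?thesis by (simp only: power_add mult_1)
      qed
      finally show "x \<in> (\<lambda>i. \<beta> ^ i) ` {..<q - 1}" using i q2 by auto
    qed
    have "card {x::'a. x \<noteq> 0} \<le> card ((\<lambda>i. \<beta> ^ i) ` {..<q - 1})" by (rule card_mono[OF _ sub]) simp
    also have "\<dots> \<le> q - 1" using card_image_le[of "{..<q - 1}" "\<lambda>i. \<beta> ^ i"] by simp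
    finally have le: "card {x::'a. x \<noteq> 0} \<le> q - 1" .
    have "{x::'a. x \<noteq> 0} = UNIV - {0}" by auto
    then have "card {x::'a. x \<noteq> 0} = q ^ 2 - 1" using assms(2) by (simp add: card_Diff_singleton)
    moreover have "q ^ 2 - 1 > q - 1"
    proof -
      have "q * 1 < q * q" using q2 by (intro mult_strict_left_mono) auto
      then show ?thesis using q2 unfolding power2_eq_square by linarith
    qed
    ultimately show False using le by simp
  qed
  have qpos: "0 < q" using q2 by simp
  interpret cyc q \<beta> n g
    by (intro cyc.intro c2f.intro cyc_axioms.intro)
       (use two frob_add frob_inv qpos b_ne assms(4-8) in \<open>simp_all add: Mp_def\<close>)
  show ?thesis
    using main unfolding Let_def Fq_def k_def hs_def h_def Mp_def by simp
qed


end
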